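(* Let $n,p$ be positive integers such that $p$ is odd and $n$ and $n+p$ are relatively prime. Let $\gamma_{n,p}(t)=(\sin(nt),\sin((n+p)t))$, $t_k=\frac{2\pi k}{4n(n+p)}$, and $\mathrm{Lisa}_{n,p}=\{\gamma_{n,p}(t_k): k=1,\ldots,4n(n+p)\}$. For $\mathcal{A}\in\mathrm{Lisa}_{n,p}$ set $w_{\mathcal{A}}=\frac{1}{4n(n+p)}$ if $\mathcal{A}$ lies on the boundary of the square $[-1,1]^2$ and $w_{\mathcal{A}}=\frac{2}{4n(n+p)}$ if $\mathcal{A}$ lies in the interior of $[-1,1]^2$. Then for all $P\in\Pi^Q_{n,p}$, \[ \frac{1}{\pi^2}\int_{-1}^1\int_{-1}^1 P(x,y)\frac{1}{\sqrt{1-x^2}}\frac{1}{\sqrt{1-y^2}}\,dx\,dy=\sum_{\mathcal{A}\in\mathrm{Lisa}_{n,p}} w_{\mathcal{A}}P(\mathcal{A}). \]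
   Context: $T_i(x)=\cos(i\arccos x)$ is the Chebyshev polynomial of the first kind of degree $i$. The index set is $\Gamma^Q_{n,p}=\{(i,j)\in\mathbb{N}_0^2: i+j\le 4n-1\}\cup\bigcup_{m=0}^{4p-1}\{(i,j)\in\mathbb{N}_0^2: i+j=4n+m,\ j<\frac{n(4p-m)}{p}\}$, and $\Pi^Q_{n,p}=\operatorname{span}\{T_i(x)T_j(y):(i,j)\in\Gamma^Q_{n,p}\}$. *)

theory Defs
  imports "HOL-Analysis.Analysis"
begin

definition cheb :: "nat \<Rightarrow> real \<Rightarrow> real" where
  "cheb i x = cos (real i * arccos x)"

definition GammaQ :: "nat \<Rightarrow> nat \<Rightarrow> (nat \<times> nat) set" where
  "GammaQ n p = {(i, j). i + j \<le> 4 * n - 1}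
     \<union> (\<Union>m\<in>{..<4 * p}. {(i, j). i + j = 4 * n + m
                                \<and> real j < real n * (4 * real p - real m) / real p})"

definition PiQ :: "nat \<Rightarrow> nat \<Rightarrow> (real \<times> real \<Rightarrow> real) set" where
  "PiQ n p = {P. \<exists>c :: nat \<times> nat \<Rightarrow> real.
      P = (\<lambda>(x, y). \<Sum>(i, j)\<in>GammaQ n p. c (i, j) * cheb i x * cheb j y)}"

definition lissajous :: "nat \<Rightarrow> nat \<Rightarrow> real \<Rightarrow> real \<times> real" where
  "lissajous n p t = (sin (real n * t), sin (real (n + p) * t))"

definition Lisa :: "nat \<Rightarrow> nat \<Rightarrow> (real \<times> real) set" where
  "Lisa n p = {lissajous n p (2 * pi * real k / real (4 * n * (n + p))) | k.
                 k \<in> {1..4 * n * (n + p)}}"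

definition lisa_weight :: "nat \<Rightarrow> nat \<Rightarrow> real \<times> real \<Rightarrow> real" where
  "lisa_weight n p A =
     (if \<bar>fst A\<bar> < 1 \<and> \<bar>snd A\<bar> < 1 then 2 / real (4 * n * (n + p))
      else 1 / real (4 * n * (n + p)))"

end

theory Submission imports Defs begin

lemma cos_shift_int: "cos (x - 2 * pi * of_int m) = cos x"
  by (simp add: cos_diff)

lemma cos_mult_abs: "cos (c * \<bar>x\<bar>) = cos (c * (x::real))"
proof (cases "x \<ge> 0")
  case False
  then have "c * \<bar>x\<bar> = - (c * x)" by simp
  then show ?thesis by simp
qed simp

lemma cheb_cos: "cheb i (cos t) = cos (real i * t)"
proof -
  obtain k where k: "arccos (cos t) = \<bar>t - of_int k * (2*pi)\<bar>" by (rule arccos_cos_eq_abs_2pi)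
  have "cos (real i * \<bar>t - of_int k * (2*pi)\<bar>) = cos (real i * (t - of_int k * (2*pi)))"
    by (rule cos_mult_abs)
  also have "\<dots> = cos (real i * t - 2 * pi * of_int (int i * k))"
    by (simp add: algebra_simps)
  also have "\<dots> = cos (real i * t)" by (rule cos_shift_int)
  finally show ?thesis by (simp add: cheb_def k)
qed

lemma cheb_sin: "cheb i (sin t) = cos (real i * (pi/2 - t))"
  by (simp add: sin_cos_eq cheb_cos)

lemma ereal_m1: "(-1::ereal) = ereal (-1)" by (simp add: one_ereal_def)

lemma wint_aux:
  fixes F f :: "real \<Rightarrow> real"
  assumes D: "\<And>x. -1 < x \<Longrightarrow> x < 1 \<Longrightarrow> DERIV F x :> f x"
    and C: "\<And>x. -1 < x \<Longrightarrow> x < 1 \<Longrightarrow> isCont f x"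
    and N: "\<And>x. -1 < x \<Longrightarrow> x < 1 \<Longrightarrow> 0 \<le> f x"
    and Fc: "continuous_on {-1..1} F"
  shows "interval_lebesgue_integrable lborel (-1) 1 f \<and> (LBINT x=-1..1. f x) = F 1 - F (-1)"
proof -
  have A: "((F \<circ> real_of_ereal) \<longlongrightarrow> F (-1)) (at_right (ereal (-1)))"
    unfolding ereal_tendsto_simps1 by (rule continuous_on_Icc_at_rightD[OF Fc]) simp
  have B: "((F \<circ> real_of_ereal) \<longlongrightarrow> F 1) (at_left (ereal 1))"
    unfolding ereal_tendsto_simps1 by (rule continuous_on_Icc_at_leftD[OF Fc]) simp
  have r: "set_integrable lborel (einterval (ereal (-1)) (ereal 1)) f"
          "(LBINT x=ereal (-1)..ereal 1. f x) = F 1 - F (-1)"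
    by (rule interval_integral_FTC_nonneg[where F=F, OF _ _ _ _ A B];
        auto intro: D C N)+
  then show ?thesis unfolding interval_lebesgue_integrable_def ereal_m1 one_ereal_def
    by simp
qed

lemma weight_int:
  "interval_lebesgue_integrable lborel (-1) 1 (\<lambda>x. 1 / sqrt (1 - x\<^sup>2)) \<and>
   (LBINT x=-1..1. 1 / sqrt (1 - x\<^sup>2)) = pi"
proof -
  have "interval_lebesgue_integrable lborel (-1) 1 (\<lambda>x. 1 / sqrt (1 - x\<^sup>2)) \<and>
   (LBINT x=-1..1. 1 / sqrt (1 - x\<^sup>2)) = (- arccos 1) - (- arccos (-1))"
  proof (rule wint_aux)
    fix x :: real assume x: "-1 < x" "x < 1"
    then have s: "0 < 1 - x\<^sup>2" by (simp add: abs_square_less_1 abs_less_iff)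
    show "DERIV (\<lambda>x. - arccos x) x :> 1 / sqrt (1 - x\<^sup>2)"
      using DERIV_arccos[OF x] DERIV_minus by (fastforce simp: divide_inverse)
    show "isCont (\<lambda>x. 1 / sqrt (1 - x\<^sup>2)) x"
      using s by (intro continuous_intros) auto
    show "0 \<le> 1 / sqrt (1 - x\<^sup>2)" using s by simp
  next
    show "continuous_on {-1..1} (\<lambda>x. - arccos x)"
      by (intro continuous_intros continuous_on_arccos') 
  qed
  then show ?thesis by simp
qed

lemma cheb_int_pos:
  assumes "i > 0"
  shows "interval_lebesgue_integrable lborel (-1) 1 (\<lambda>x. (1 + cheb i x) * (1 / sqrt (1 - x\<^sup>2))) \<and>
   (LBINT x=-1..1. (1 + cheb i x) * (1 / sqrt (1 - x\<^sup>2))) = pi"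
proof -
  have "interval_lebesgue_integrable lborel (-1) 1 (\<lambda>x. (1 + cheb i x) * (1 / sqrt (1 - x\<^sup>2))) \<and>
   (LBINT x=-1..1. (1 + cheb i x) * (1 / sqrt (1 - x\<^sup>2))) =
     (- sin (real i * arccos 1) / real i - arccos 1) - (- sin (real i * arccos (-1)) / real i - arccos (-1))"
  proof (rule wint_aux)
    fix x :: real assume x: "-1 < x" "x < 1"
    then have s: "0 < 1 - x\<^sup>2" by (simp add: abs_square_less_1 abs_less_iff)
    show "DERIV (\<lambda>x. - sin (real i * arccos x) / real i - arccos x) x :> (1 + cheb i x) * (1 / sqrt (1 - x\<^sup>2))"
      using s x assms unfolding cheb_def
      by (auto intro!: derivative_eq_intros DERIV_arccos[OF x] simp: field_simps)
    show "isCont (\<lambda>x. (1 + cheb i x) * (1 / sqrt (1 - x\<^sup>2))) x"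
      using s x unfolding cheb_def by (intro continuous_intros isCont_arccos) auto
    have "0 \<le> 1 + cheb i x" unfolding cheb_def using cos_ge_minus_one[of "real i * arccos x"] by linarith
    then show "0 \<le> (1 + cheb i x) * (1 / sqrt (1 - x\<^sup>2))" using s by simp
  next
    show "continuous_on {-1..1} (\<lambda>x. - sin (real i * arccos x) / real i - arccos x)"
      using assms by (intro continuous_intros continuous_on_arccos') auto
  qed
  then show ?thesis by (simp add: sin_npi)
qed

lemma cheb_int:
  "interval_lebesgue_integrable lborel (-1) 1 (\<lambda>x. cheb i x * (1 / sqrt (1 - x\<^sup>2))) \<and>
   (LBINT x=-1..1. cheb i x * (1 / sqrt (1 - x\<^sup>2))) = (if i = 0 then pi else 0)"
proof (cases "i = 0")
  case True
  then show ?thesis using weight_int by (simp add: cheb_def)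
next
  case False
  have e: "(\<lambda>x. cheb i x * (1 / sqrt (1 - x\<^sup>2))) =
     (\<lambda>x. (1 + cheb i x) * (1 / sqrt (1 - x\<^sup>2)) - 1 / sqrt (1 - x\<^sup>2))"
    by (simp add: fun_eq_iff diff_divide_distrib[symmetric])
  show ?thesis unfolding e using cheb_int_pos[of i] False weight_int
    by (subst interval_lebesgue_integral_diff) auto
qed

lemma lbint_sum:
  fixes f :: "'b \<Rightarrow> real \<Rightarrow> real"
  assumes "finite S" "\<And>s. s \<in> S \<Longrightarrow> interval_lebesgue_integrable lborel a b (f s)"
  shows "interval_lebesgue_integrable lborel a b (\<lambda>x. \<Sum>s\<in>S. f s x) \<and>
         (LBINT x=a..b. (\<Sum>s\<in>S. f s x)) = (\<Sum>s\<in>S. LBINT x=a..b. f s x)"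
  using assms
proof (induction S rule: finite_induct)
  case empty
  then show ?case by (simp add: interval_lebesgue_integrable_def set_integrable_def)
next
  case (insert s S)
  then show ?case by simp
qed

abbreviation wt :: "real \<Rightarrow> real" where "wt x \<equiv> 1 / sqrt (1 - x\<^sup>2)"

lemma lhs_eval:
  fixes c :: "nat \<times> nat \<Rightarrow> real"
  assumes G: "finite G" "(0,0) \<in> G"
  shows "1 / pi\<^sup>2 * (LBINT x=-1..1. (LBINT y=-1..1.
            (\<Sum>s\<in>G. c s * cheb (fst s) x * cheb (snd s) y) * wt x * wt y)) = c (0,0)"
proof -
  define I where "I j = (if j = 0 then pi else 0)" for j :: nat
  have ci: "interval_lebesgue_integrable lborel (-1) 1 (\<lambda>x. cheb i x * wt x)"
    and cv: "(LBINT x=-1..1. cheb i x * wt x) = I i" for i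
    using cheb_int[of i] by (auto simp: I_def)
  have inner: "(LBINT y=-1..1. (\<Sum>s\<in>G. c s * cheb (fst s) x * cheb (snd s) y) * wt x * wt y)
      = (\<Sum>s\<in>G. (c s * I (snd s)) * (cheb (fst s) x * wt x))" for x
  proof -
    have e: "(\<lambda>y. (\<Sum>s\<in>G. c s * cheb (fst s) x * cheb (snd s) y) * wt x * wt y)
       = (\<lambda>y. \<Sum>s\<in>G. (c s * cheb (fst s) x * wt x) * (cheb (snd s) y * wt y))"
      by (simp add: fun_eq_iff sum_distrib_right sum_divide_distrib mult_ac)
    have "(LBINT y=-1..1. (\<Sum>s\<in>G. (c s * cheb (fst s) x * wt x) * (cheb (snd s) y * wt y)))
        = (\<Sum>s\<in>G. LBINT y=-1..1. (c s * cheb (fst s) x * wt x) * (cheb (snd s) y * wt y))"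
      by (rule lbint_sum[OF G(1), THEN conjunct2]) (intro interval_lebesgue_integrable_mult_right ci)
    also have "\<dots> = (\<Sum>s\<in>G. (c s * I (snd s)) * (cheb (fst s) x * wt x))"
      by (rule sum.cong[OF refl]) (simp only: interval_lebesgue_integral_mult_right cv, simp add: mult_ac)
    finally show ?thesis unfolding e .
  qed
  have "(LBINT x=-1..1. (\<Sum>s\<in>G. (c s * I (snd s)) * (cheb (fst s) x * wt x)))
     = (\<Sum>s\<in>G. LBINT x=-1..1. (c s * I (snd s)) * (cheb (fst s) x * wt x))"
    by (rule lbint_sum[OF G(1), THEN conjunct2]) (intro interval_lebesgue_integrable_mult_right ci)
  also have "\<dots> = (\<Sum>s\<in>G. (c s * I (snd s)) * I (fst s))"
      by (rule sum.cong) (simp_all only: interval_lebesgue_integral_mult_right cv)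
  finally have outer: "(LBINT x=-1..1. (\<Sum>s\<in>G. (c s * I (snd s)) * (cheb (fst s) x * wt x)))
     = (\<Sum>s\<in>G. (c s * I (snd s)) * I (fst s))" .
  have "(\<Sum>s\<in>G. (c s * I (snd s)) * I (fst s)) = (\<Sum>s\<in>G. if s = (0,0) then c (0,0) * pi\<^sup>2 else 0)"
    by (rule sum.cong) (auto simp: I_def power2_eq_square)
  also have "\<dots> = c (0,0) * pi\<^sup>2" using G by simp
  finally show ?thesis unfolding inner outer by simp
qed

lemma disc_sum:
  fixes N :: nat and m :: int and a :: real
  assumes N: "N > 0"
  shows "(\<Sum>k=1..N. cos (a + 2*pi* of_int m*real k/real N)) = (if int N dvd m then real N * cos a else 0)"
proof -
  define z where "z = cis (2*pi* of_int m/real N)"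
  have t: "cos (a + 2*pi* of_int m*real k/real N) = Re (cis a * z ^ k)" for k
  proof -
    have "cis a * z ^ k = cis (a + 2*pi* of_int m*real k/real N)"
      unfolding z_def Complex.DeMoivre cis_mult by (simp add: mult_ac)
    then show ?thesis by simp
  qed
  have S: "(\<Sum>k=1..N. cos (a + 2*pi* of_int m*real k/real N)) = Re (\<Sum>k=1..N. cis a * z ^ k)"
    by (simp only: t Re_sum)
  show ?thesis
  proof (cases "int N dvd m")
    case True
    then obtain d where d: "m = int N * d" by (elim dvdE)
    have "2*pi* of_int m/real N = 2*pi* of_int d" unfolding d using N by simp
    then have "z = 1" unfolding z_def by simp
    then have "(\<Sum>k=1..N. cis a * z ^ k) = of_nat N * cis a" by simp
    then show ?thesis using True S by simp
  next
    case False
    have z1: "z \<noteq> 1"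
    proof
      assume "z = 1"
      moreover have "Re z = cos (2*pi* of_int m/real N)" unfolding z_def by simp
      ultimately have "cos (2*pi* of_int m/real N) = 1" by simp
      then obtain n :: int where "2*pi* of_int m/real N = of_int n * 2 * pi"
        using cos_one_2pi_int by blast
      then have "of_int m = of_int n * (real N)" using N by (simp add: field_simps)
      then have "real_of_int m = real_of_int (n * int N)" by simp
      then have "m = n * int N" by (simp only: of_int_eq_iff)
      then show False using False by simp
    qed
    have "real N * (2*pi* of_int m/real N) = 2*pi* of_int m" using N by simp
    then have "z ^ N = cis (2*pi* of_int m)" by (simp only: z_def Complex.DeMoivre)
    then have zN: "z ^ N = 1" by simp
    have "(\<Sum>k=1..N. cis a * z ^ k) = (\<Sum>k<N. cis a * z ^ Suc k)"
      using sum.atLeast1_atMost_eq[of "\<lambda>k. cis a * z ^ k" N] by simp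
    also have "\<dots> = cis a * z * (\<Sum>k<N. z ^ k)"
      by (simp add: sum_distrib_left mult_ac)
    also have "(\<Sum>k<N. z ^ k) = 0" using z1 zN by (simp add: sum_gp_strict)
    finally show ?thesis using S False by simp
  qed
qed

lemma cos_odd_half: "odd (r::int) \<Longrightarrow> cos (real_of_int r * pi / 2) = 0"
proof -
  assume "odd r"
  then obtain u where r: "r = 2 * u + 1" by (elim oddE)
  have "real_of_int r * pi / 2 = real_of_int u * pi + pi/2" unfolding r by (simp add: algebra_simps)
  then show ?thesis using cos_zero_iff_int2 by blast
qed

lemma gamma_bound:
  assumes n: "n > 0" and p: "p > 0" and G: "(i,j) \<in> GammaQ n p"
    and ia: "i = a*(n+p)" and jb: "j = b*n"
  shows "a + b < 4"
proof -
  show ?thesis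
  proof (cases "i + j \<le> 4*n - 1")
    case True
    then have "i + j < 4*n" using n by linarith
    then have "real i + real j < 4 * real n" by linarith
    moreover have "real i = real a * (real n + real p)" "real j = real b * real n"
      using ia jb by simp_all
    moreover have "0 \<le> real a * real p" by simp
    moreover have "real a * (real n + real p) = real a * real n + real a * real p" by (simp add: algebra_simps)
    ultimately have "real a * real n + real b * real n < 4 * real n" by linarith
    then have "(real a + real b) * real n < 4 * real n" by (simp add: algebra_simps)
    then have "real a + real b < 4" using n by (simp add: mult_less_cancel_right_pos)
    then show ?thesis by simp
  next
    case False
    then obtain m where m: "m < 4*p" "i + j = 4*n + m"
       "real j < real n * (4 * real p - real m) / real p"
      using G unfolding GammaQ_def by auto
    have "real j * real p < real n * (4 * real p - real m)"
      using m(3) p by (simp add: pos_less_divide_eq)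
    then have "real n * (real b * real p) < real n * (4 * real p - real m)"
      using jb by (simp add: algebra_simps)
    then have "real b * real p < 4 * real p - real m" using n by simp
    moreover have "real m = real a * (real n + real p) + real b * real n - 4 * real n"
    proof -
      have r1: "real i + real j = 4 * real n + real m" using arg_cong[OF m(2), of real] by simp
      have r2: "real i = real a * real n + real a * real p" using ia by (simp add: algebra_simps)
      have r3: "real j = real b * real n" using jb by simp
      have r4: "real a * (real n + real p) = real a * real n + real a * real p" by (simp add: algebra_simps)
      show ?thesis using r1 r2 r3 r4 by linarith
    qed
    ultimately have "real (a + b) * (real n + real p) < 4 * (real n + real p)" by (simp add: algebra_simps)
    then have "real (a+b) < 4" by (rule mult_right_less_imp_less) simp
    then show ?thesis by simp
  qed
qed

lemma coprime_int_nat: "coprime n q \<Longrightarrow> coprime (int n) (int q)" by simp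

lemma nt_plus:
  assumes n: "n > 0" and p: "p > 0" and op: "odd p" and cop: "coprime n (n+p)"
    and G: "(i,j) \<in> GammaQ n p"
    and d: "int (4*n*(n+p)) dvd (int i * int n + int j * int (n+p))"
  shows "(i,j) = (0,0) \<or> cos ((real i + real j) * pi / 2) = 0"
proof -
  define q where "q = n + p"
  have cq: "coprime (int n) (int q)" using cop unfolding q_def by (simp only: coprime_int_iff)
  have d': "int (4*n*q) dvd (int i * int n + int j * int q)" using d unfolding q_def .
  have "int n dvd int (4*n*q)" by simp
  then have "int n dvd int i * int n + int j * int q" using d' dvd_trans by blast
  then have "int n dvd int j * int q" by (simp add: dvd_add_right_iff)
  then have "int n dvd int j" using cq by (simp add: coprime_dvd_mult_left_iff)
  then obtain b where jb: "j = b * n" by (metis dvd_def int_dvd_int_iff mult.commute)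
  have "int q dvd int (4*n*q)" by simp
  then have "int q dvd int i * int n + int j * int q" using d' dvd_trans by blast
  then have "int q dvd int i * int n" by (simp add: dvd_add_left_iff)
  then have "int q dvd int i" using cq by (simp add: coprime_commute coprime_dvd_mult_left_iff)
  then obtain a where ia: "i = a * q" by (metis dvd_def int_dvd_int_iff mult.commute)
  have "int i * int n + int j * int q = int ((a+b) * (n*q))" unfolding ia jb by (simp add: algebra_simps)
  moreover have "int (4*n*q) = int (4 * (n*q))" by (simp add: mult_ac)
  ultimately have "4 * (n*q) dvd (a+b) * (n*q)" using d' by (simp only: int_dvd_int_iff)
  then have d4: "4 dvd a + b" using n unfolding q_def by simp
  have ab: "a + b < 4" using gamma_bound[OF n p G, of a b] ia jb unfolding q_def by simp
  show ?thesis
  proof (cases "even a")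
    case True
    then have "a = 0 \<and> b = 0" using d4 ab by presburger
    then show ?thesis using ia jb by simp
  next
    case False
    have e: "i + j = (a+b)*n + a*p" unfolding ia jb q_def by (simp add: algebra_simps)
    have "2 dvd a + b" using dvd_trans[of 2 4 "a+b"] d4 by simp
    then have "even ((a+b)*n)" by simp
    moreover have "odd (a*p)" using False op by simp
    ultimately have "odd (i+j)" unfolding e by simp
    then have "odd (int (i+j))" by simp
    then have "cos (real_of_int (int (i+j)) * pi / 2) = 0" by (rule cos_odd_half)
    then show ?thesis by simp
  qed
qed

lemma nt_minus:
  assumes n: "n > 0" and p: "p > 0" and op: "odd p" and cop: "coprime n (n+p)"
    and G: "(i,j) \<in> GammaQ n p"
    and d: "int (4*n*(n+p)) dvd (int i * int n - int j * int (n+p))"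
  shows "(i,j) = (0,0) \<or> cos ((real i - real j) * pi / 2) = 0"
proof -
  define q where "q = n + p"
  have cq: "coprime (int n) (int q)" using cop unfolding q_def by (simp only: coprime_int_iff)
  have d': "int (4*n*q) dvd (int i * int n - int j * int q)" using d unfolding q_def .
  have "int n dvd int (4*n*q)" by simp
  then have "int n dvd int i * int n - int j * int q" using d' dvd_trans by blast
  then have "int n dvd int i * int n - (int i * int n - int j * int q)"
    by (rule dvd_diff[OF dvd_triv_right])
  then have "int n dvd int j * int q" by simp
  then have "int n dvd int j" using cq by (simp add: coprime_dvd_mult_left_iff)
  then obtain b where jb: "j = b * n" by (metis dvd_def int_dvd_int_iff mult.commute)
  have "int q dvd int (4*n*q)" by simp
  then have "int q dvd int i * int n - int j * int q" using d' dvd_trans by blast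
  then have "int q dvd (int i * int n - int j * int q) + int j * int q"
    by (rule dvd_add[OF _ dvd_triv_right])
  then have "int q dvd int i * int n" by simp
  then have "int q dvd int i" using cq by (simp add: coprime_commute coprime_dvd_mult_left_iff)
  then obtain a where ia: "i = a * q" by (metis dvd_def int_dvd_int_iff mult.commute)
  have "int i * int n - int j * int q = (int a - int b) * int (n*q)" unfolding ia jb by (simp add: algebra_simps)
  moreover have "int (4*n*q) = 4 * int (n*q)" by simp
  ultimately have "4 * int (n*q) dvd (int a - int b) * int (n*q)" using d' by simp
  then have d4: "4 dvd int a - int b" using n unfolding q_def by simp
  have ab: "a + b < 4" using gamma_bound[OF n p G, of a b] ia jb unfolding q_def by simp
  show ?thesis
  proof (cases "even a")
    case True
    then have "a = 0 \<and> b = 0" using d4 ab by presburger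
    then show ?thesis using ia jb by simp
  next
    case False
    have e: "int i - int j = (int a - int b)*int n + int a*int p" unfolding ia jb q_def by (simp add: algebra_simps)
    have "2 dvd int a - int b" using dvd_trans[of 2 4 "int a - int b"] d4 by simp
    then have "even ((int a - int b)*int n)" by simp
    moreover have "odd (int a*int p)" using False op by simp
    ultimately have "odd (int i - int j)" unfolding e by simp
    then have "cos (real_of_int (int i - int j) * pi / 2) = 0" by (rule cos_odd_half)
    then show ?thesis by simp
  qed
qed

lemma orth:
  assumes n: "n > 0" and p: "p > 0" and op: "odd p" and cop: "coprime n (n+p)"
    and G: "(i,j) \<in> GammaQ n p" and q: "q = n + p" and N: "N = 4*n*q"
  shows "(\<Sum>k=1..N. cheb i (sin (real n * (2*pi*real k/real N))) * cheb j (sin (real q * (2*pi*real k/real N))))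
     = (if (i,j) = (0,0) then real N else 0)"
proof -
  have N0: "N > 0" using n p q N by simp
  define a1 where "a1 = (real i + real j)*pi/2"
  define m1 where "m1 = -(int i*int n + int j*int q)"
  define a2 where "a2 = (real i - real j)*pi/2"
  define m2 where "m2 = -(int i*int n - int j*int q)"
  have tm: "cheb i (sin (real n * (2*pi*real k/real N))) * cheb j (sin (real q * (2*pi*real k/real N)))
     = (cos (a2 + 2*pi * of_int m2*real k/real N) + cos (a1 + 2*pi * of_int m1*real k/real N)) / 2" for k
  proof -
    define t where "t = 2*pi*real k/real N"
    have e1: "2*pi * of_int m2*real k/real N = of_int m2 * t" "2*pi * of_int m1*real k/real N = of_int m1 * t"
      unfolding t_def by simp_all
    have e2: "real i * (pi/2 - real n * t) - real j * (pi/2 - real q * t) = a2 + of_int m2 * t"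
      "real i * (pi/2 - real n * t) + real j * (pi/2 - real q * t) = a1 + of_int m1 * t"
      unfolding a1_def a2_def m1_def m2_def by (simp_all add: algebra_simps add_divide_distrib diff_divide_distrib)
    show ?thesis unfolding t_def[symmetric] cheb_sin cos_times_cos e1 e2 ..
  qed
  have S: "(\<Sum>k=1..N. cheb i (sin (real n * (2*pi*real k/real N))) * cheb j (sin (real q * (2*pi*real k/real N))))
     = ((\<Sum>k=1..N. cos (a2 + 2*pi * of_int m2*real k/real N)) + (\<Sum>k=1..N. cos (a1 + 2*pi * of_int m1*real k/real N))) / 2"
    unfolding tm by (simp only: sum_divide_distrib[symmetric] sum.distrib)
  have d1: "int N dvd m1 \<longleftrightarrow> int (4*n*(n+p)) dvd (int i * int n + int j * int (n+p))"
    by (simp only: m1_def N q dvd_minus_iff)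
  have d2: "int N dvd m2 \<longleftrightarrow> int (4*n*(n+p)) dvd (int i * int n - int j * int (n+p))"
    by (simp only: m2_def N q dvd_minus_iff)
  show ?thesis
  proof (cases "(i,j) = (0,0)")
    case True
    then show ?thesis unfolding S disc_sum[OF N0] by (simp add: a1_def a2_def m1_def m2_def)
  next
    case False
    have z1: "(if int N dvd m1 then real N * cos a1 else 0) = 0"
      using nt_plus[OF n p op cop G] d1 False unfolding a1_def by auto
    have z2: "(if int N dvd m2 then real N * cos a2 else 0) = 0"
      using nt_minus[OF n p op cop G] d2 False unfolding a2_def by auto
    show ?thesis unfolding S disc_sum[OF N0] z1 z2 using False by auto
  qed
qed

lemma uniq_mod:
  fixes M Q l1 l2 :: int
  assumes M: "M > 0" and Q: "Q > 0" and cop: "coprime M Q"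
    and l: "1 \<le> l1" "l1 \<le> 4*M*Q" "1 \<le> l2" "l2 \<le> 4*M*Q"
    and dQ: "4*Q dvd l1 - l2" and dM: "4*M dvd l1 - l2"
  shows "l1 = l2"
proof -
  obtain e where e: "l1 - l2 = 4*Q*e" using dQ by (elim dvdE)
  have "M * 4 dvd Q * (4 * e)" using dM unfolding e by (simp add: mult_ac)
  then have "M dvd Q * e" by (simp add: mult_ac)
  then have "M dvd e" using cop by (simp add: coprime_dvd_mult_right_iff)
  then obtain f where f: "e = M * f" by (elim dvdE)
  have d: "l1 - l2 = (4*M*Q) * f" using e f by (simp add: mult_ac)
  have P: "4*M*Q > 0" using M Q by simp
  have "\<bar>l1 - l2\<bar> < 4*M*Q" using l by linarith
  moreover have "\<bar>l1 - l2\<bar> = 4*M*Q * \<bar>f\<bar>" using d M Q by (simp add: abs_mult)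
  ultimately have "4*M*Q * \<bar>f\<bar> < 4*M*Q * 1" by simp
  then have "\<bar>f\<bar> < 1" using P by (simp only: mult_less_cancel_left_pos)
  then have "f = 0" by simp
  then show ?thesis using d by simp
qed

lemma fiber_nt:
  fixes M Q k :: int
  assumes M: "M > 0" and Q: "Q > 0" and cop: "coprime M Q" and od: "odd (M + Q)"
    and k: "1 \<le> k" "k \<le> 4*M*Q" and ek: "even (k - M)"
  shows "card {l. 1 \<le> l \<and> l \<le> 4*M*Q \<and> (4*Q dvd l - k \<or> 4*Q dvd l + k - 2*Q) \<and> (4*M dvd l - k \<or> 4*M dvd l + k - 2*M)}
     = (if 2*Q dvd k - Q \<or> 2*M dvd k - M then 1 else 2)"
proof -
  define N where "N = 4*M*Q"
  have N0: "N > 0" using M Q by (simp add: N_def)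
  have "gcd Q M = 1" using cop by (simp add: coprime_iff_gcd_eq_1 gcd.commute)
  then obtain u v where uv: "u * Q + v * M = 1" using bezout_int[of Q M] by auto
  have "even (M - k)" using ek by (simp add: dvd_diff_commute)
  then obtain c where c: "M - k = 2 * c" by (elim evenE)
  define s0 where "s0 = k + 4*Q*u*c"
  define s where "s = (s0 - 1) mod N + 1"
  have s_range: "1 \<le> s" "s \<le> N" unfolding s_def
    using pos_mod_bound[OF N0, of "s0-1"] pos_mod_sign[OF N0, of "s0-1"] by linarith+
  have e1: "N dvd ((s0 - 1) mod N) - (s0 - 1)" by (simp add: mod_eq_dvd_iff[symmetric])
  have e2: "s - s0 = (s0 - 1) mod N - (s0 - 1)" unfolding s_def by simp
  have Ns: "N dvd s - s0" unfolding e2 by (rule e1)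
  have "4*Q dvd N" "4*M dvd N" unfolding N_def by (simp_all add: mult_ac)
  then have Qs: "4*Q dvd s - s0" and Ms: "4*M dvd s - s0" using Ns dvd_trans by blast+
  have s0Q: "s0 - k = 4*Q*(u*c)" unfolding s0_def by (simp add: mult_ac)
  have s0M: "s0 + k - 2*M = 4*M*(0 - c * v)" unfolding s0_def using uv c by algebra
  have sQ: "4*Q dvd s - k"
  proof -
    have eq: "s - k = (s - s0) + 4*Q*(u*c)" using s0Q by simp
    show ?thesis unfolding eq by (rule dvd_add[OF Qs dvd_triv_left])
  qed
  have sM: "4*M dvd s + k - 2*M"
  proof -
    have eq: "s + k - 2*M = (s - s0) + 4*M*(0 - c * v)" using s0M by simp
    show ?thesis unfolding eq by (rule dvd_add[OF Ms dvd_triv_left])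
  qed
  have oddkQ: "odd (k - Q)" using ek od by presburger
  let ?S = "{l. 1 \<le> l \<and> l \<le> 4*M*Q \<and> (4*Q dvd l - k \<or> 4*Q dvd l + k - 2*Q) \<and> (4*M dvd l - k \<or> 4*M dvd l + k - 2*M)}"
  have U: "l1 = l2" if "1 \<le> l1" "l1 \<le> N" "1 \<le> l2" "l2 \<le> N" "4*Q dvd l1 - l2" "4*M dvd l1 - l2" for l1 l2
    using uniq_mod[OF M Q cop, of l1 l2] that unfolding N_def by blast
  have set: "?S = {k, s}"
  proof
    show "{k, s} \<subseteq> ?S" using k s_range sQ sM unfolding N_def by auto
  next
    show "?S \<subseteq> {k, s}"
    proof
      fix l assume "l \<in> ?S"
      then have l: "1 \<le> l" "l \<le> N" and FQ: "4*Q dvd l - k \<or> 4*Q dvd l + k - 2*Q"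
        and FM: "4*M dvd l - k \<or> 4*M dvd l + k - 2*M" unfolding N_def by auto
      have d4Q: "4 dvd x" if "4*Q dvd x" for x using that dvd_mult_left by blast
      have d4M: "4 dvd x" if "4*M dvd x" for x using that dvd_mult_left by blast
      consider "4*Q dvd l - k" "4*M dvd l - k" | "4*Q dvd l - k" "4*M dvd l + k - 2*M"
        | "4*Q dvd l + k - 2*Q" "4*M dvd l - k" | "4*Q dvd l + k - 2*Q" "4*M dvd l + k - 2*M"
        using FQ FM by blast
      then show "l \<in> {k, s}"
      proof cases
        case 1
        then have "l = k" using U[of l k] l k unfolding N_def by blast
        then show ?thesis by simp
      next
        case 2
        have a: "4*Q dvd l - s"
        proof -
          have "l - s = (l - k) - (s - k)" by simp
          then show ?thesis using 2(1) sQ by (metis dvd_diff)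
        qed
        have b: "4*M dvd l - s"
        proof -
          have "l - s = (l + k - 2*M) - (s + k - 2*M)" by simp
          then show ?thesis using 2(2) sM by (metis dvd_diff)
        qed
        have "l = s" using U[OF l s_range a b] .
        then show ?thesis by simp
      next
        case 3
        have "4 dvd l + k - 2*Q" "4 dvd l - k" using 3 d4Q d4M by blast+
        then obtain x y where "l + k - 2*Q = 4*x" "l - k = 4*y" by (auto elim!: dvdE)
        then have "k - Q = 2*(x - y)" by (simp add: algebra_simps)
        then have False using oddkQ by simp
        then show ?thesis ..
      next
        case 4
        have "4 dvd l + k - 2*Q" "4 dvd l + k - 2*M" using 4 d4Q d4M by blast+
        then obtain x y where "l + k - 2*Q = 4*x" "l + k - 2*M = 4*y" by (auto elim!: dvdE)
        then have "M + Q = 2*(Q + x - y)" by algebra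
        then have False using od by simp
        then show ?thesis ..
      qed
    qed
  qed
  have iff: "s = k \<longleftrightarrow> (2*Q dvd k - Q \<or> 2*M dvd k - M)"
  proof
    assume "s = k"
    then have "4*M dvd 2*(k - M)" using sM by (simp add: algebra_simps)
    then have "2*(2*M) dvd 2*(k - M)" by simp
    then have "2*M dvd k - M" by (simp only: dvd_mult_cancel_left) simp
    then show "2*Q dvd k - Q \<or> 2*M dvd k - M" ..
  next
    assume h: "2*Q dvd k - Q \<or> 2*M dvd k - M"
    have "\<not> 2*Q dvd k - Q" using oddkQ dvd_mult_left by blast
    then have "2*M dvd k - M" using h by blast
    then have "2*(2*M) dvd 2*(k - M)" by (rule mult_dvd_mono[OF dvd_refl])
    then have "4*M dvd 2*(k - M)" by simp
    then have b: "4*M dvd k - s"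
    proof -
      assume "4*M dvd 2*(k - M)"
      moreover have "k - s = 2*(k - M) - (s + k - 2*M)" by (simp add: algebra_simps)
      ultimately show ?thesis using sM dvd_diff by metis
    qed
    have "k - s = - (s - k)" by simp
    then have a: "4*Q dvd k - s" using sQ by (simp only: dvd_minus_iff)
    have "k = s" using U[OF _ _ s_range a b] k unfolding N_def by blast
    then show "s = k" by simp
  qed
  show ?thesis unfolding set using iff by auto
qed


lemma sin0_iff:
  assumes e: "e > 0"
  shows "sin (pi * of_int r / real e) = 0 \<longleftrightarrow> int e dvd r"
proof -
  have "(pi * of_int r / real e = of_int i * pi) \<longleftrightarrow> r = int e * i" for i
  proof -
    have "(pi * of_int r / real e = of_int i * pi) \<longleftrightarrow> real_of_int r = real e * of_int i"
      using e pi_gt_zero by (auto simp: field_simps)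
    also have "\<dots> \<longleftrightarrow> real_of_int r = real_of_int (int e * i)" by simp
    also have "\<dots> \<longleftrightarrow> r = int e * i" by (simp only: of_int_eq_iff)
    finally show ?thesis .
  qed
  then show ?thesis unfolding sin_zero_iff_int2 dvd_def by auto
qed

lemma cos0_iff:
  assumes e: "e > 0"
  shows "cos (pi * of_int r / (2 * real e)) = 0 \<longleftrightarrow> 2 * int e dvd r - int e"
proof -
  have "(pi * of_int r / (2 * real e) = of_int i * pi + pi / 2) \<longleftrightarrow> r - int e = 2 * int e * i" for i
  proof -
    have "(pi * of_int r / (2 * real e) = of_int i * pi + pi / 2) \<longleftrightarrow>
          pi * real_of_int r = pi * (2 * real e * of_int i + real e)"
      using e by (simp add: field_simps)
    also have "\<dots> \<longleftrightarrow> real_of_int r = 2 * real e * of_int i + real e"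
      using pi_gt_zero by simp
    also have "\<dots> \<longleftrightarrow> real_of_int r = real_of_int (2 * int e * i + int e)" by simp
    also have "\<dots> \<longleftrightarrow> r - int e = 2 * int e * i" by (simp only: of_int_eq_iff) linarith
    finally show ?thesis .
  qed
  then show ?thesis unfolding cos_zero_iff_int2 dvd_def by auto
qed

lemma sin_eq_dvd:
  assumes d: "d > 0"
  shows "sin (pi * of_int x / (2 * real d)) = sin (pi * of_int y / (2 * real d)) \<longleftrightarrow>
     (4 * int d dvd x - y \<or> 4 * int d dvd x + y - 2 * int d)"
proof -
  let ?w = "pi * of_int x / (2 * real d)" and ?z = "pi * of_int y / (2 * real d)"
  have "sin ?w = sin ?z \<longleftrightarrow> sin ?w - sin ?z = 0" by simp
  also have "\<dots> \<longleftrightarrow> sin ((?w - ?z)/2) = 0 \<or> cos ((?w + ?z)/2) = 0"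
    unfolding sin_diff_sin by simp
  also have "(?w - ?z)/2 = pi * of_int (x - y) / real (4*d)" using d by (simp add: field_simps)
  also have "(?w + ?z)/2 = pi * of_int (x + y) / (2 * real (2*d))" using d by (simp add: field_simps)
  also have "sin (pi * of_int (x - y) / real (4*d)) = 0 \<longleftrightarrow> 4 * int d dvd x - y"
    using sin0_iff[of "4*d" "x - y"] d by simp
  also have "cos (pi * of_int (x + y) / (2 * real (2*d))) = 0 \<longleftrightarrow> 4 * int d dvd x + y - 2 * int d"
    using cos0_iff[of "2*d" "x + y"] d by (simp add: mult_ac)
  finally show ?thesis .
qed

lemma abs_sin_less_1: "\<bar>sin (t::real)\<bar> < 1 \<longleftrightarrow> cos t \<noteq> 0"
proof -
  have "\<bar>sin t\<bar> < 1 \<longleftrightarrow> (sin t)\<^sup>2 < 1" using abs_square_less_1[of "sin t"] by simp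
  also have "\<dots> \<longleftrightarrow> 0 < (cos t)\<^sup>2" using sin_cos_squared_add[of t] by linarith
  also have "\<dots> \<longleftrightarrow> cos t \<noteq> 0" by simp
  finally show ?thesis .
qed

lemma rhs:
  fixes h :: "real \<times> real \<Rightarrow> real"
  assumes n: "n > 0" and p: "p > 0" and op: "odd p" and cop: "coprime n (n+p)"
  shows "(\<Sum>A\<in>Lisa n p. lisa_weight n p A * h A)
     = (\<Sum>k\<in>{1..4*n*(n+p)}. h (lissajous n p (2*pi*real k/real (4*n*(n+p))))) / real (4*n*(n+p))"
proof -
  define q where "q = n + p"
  define N where "N = 4*n*q"
  define g where "g k = lissajous n p (2*pi*real k/real N)" for k :: nat
  have q0: "q > 0" and N0: "N > 0" using n p by (simp_all add: q_def N_def)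
  have L: "Lisa n p = g ` {1..N}" unfolding Lisa_def g_def N_def q_def by auto
  have gk: "g k = (sin (pi * of_int (int k) / (2*real q)), sin (pi * of_int (int k) / (2*real n)))" for k
  proof -
    have "real n * (2*pi*real k/real N) = pi * of_int (int k) / (2*real q)"
      unfolding N_def using n q0 by (simp add: field_simps)
    moreover have "real (n+p) * (2*pi*real k/real N) = pi * of_int (int k) / (2*real n)"
    proof -
      have "real (n+p) * (2*pi*real k/real N) = real q * (2*pi*real k/real N)" by (simp add: q_def)
      also have "\<dots> = pi * of_int (int k) / (2*real n)" unfolding N_def using n q0 by (simp add: field_simps)
      finally show ?thesis .
    qed
    ultimately show ?thesis unfolding g_def lissajous_def by simp
  qed
  define M where "M = int n"
  define Q where "Q = int q"
  have M0: "M > 0" and Q0: "Q > 0" using n q0 by (simp_all add: M_def Q_def)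
  have copMQ: "coprime M Q" using cop unfolding M_def Q_def q_def by (simp only: coprime_int_iff)
  have oddMQ: "odd (M + Q)" using op unfolding M_def Q_def q_def by simp
  have NMQ: "int N = 4*M*Q" unfolding N_def M_def Q_def by simp
  have fib: "card {l\<in>{1..N}. g l = g k} =
     (if 2*Q dvd int k - Q \<or> 2*M dvd int k - M then 1 else 2)" if k: "k \<in> {1..N}" for k
  proof -
    define K where "K = int k"
    define P where "P l \<longleftrightarrow> (4*Q dvd l - K \<or> 4*Q dvd l + K - 2*Q) \<and> (4*M dvd l - K \<or> 4*M dvd l + K - 2*M)" for l
    have gP: "g l = g k \<longleftrightarrow> P (int l)" for l
      by (simp only: gk prod.inject P_def K_def M_def Q_def sin_eq_dvd[OF q0] sin_eq_dvd[OF n])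
    have im: "int ` {l\<in>{1..N}. g l = g k} = {l. 1 \<le> l \<and> l \<le> 4*M*Q \<and> P l}"
    proof
      show "int ` {l\<in>{1..N}. g l = g k} \<subseteq> {l. 1 \<le> l \<and> l \<le> 4*M*Q \<and> P l}"
        using gP NMQ by auto
    next
      show "{l. 1 \<le> l \<and> l \<le> 4*M*Q \<and> P l} \<subseteq> int ` {l\<in>{1..N}. g l = g k}"
      proof
        fix l assume "l \<in> {l. 1 \<le> l \<and> l \<le> 4*M*Q \<and> P l}"
        then have l: "1 \<le> l" "l \<le> 4*M*Q" "P l" by auto
        have "nat l \<in> {l\<in>{1..N}. g l = g k}" using l gP[of "nat l"] NMQ by auto
        moreover have "l = int (nat l)" using l by simp
        ultimately show "l \<in> int ` {l\<in>{1..N}. g l = g k}" by blast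
      qed
    qed
    have "card {l\<in>{1..N}. g l = g k} = card (int ` {l\<in>{1..N}. g l = g k})"
      by (simp add: card_image)
    also have "\<dots> = card {l. 1 \<le> l \<and> l \<le> 4*M*Q \<and> P l}" unfolding im ..
    also have "\<dots> = (if 2*Q dvd K - Q \<or> 2*M dvd K - M then 1 else 2)"
    proof (cases "even (K - M)")
      case True
      show ?thesis unfolding P_def
        by (rule fiber_nt[OF M0 Q0 copMQ oddMQ _ _ True]) (use k NMQ in \<open>auto simp: K_def\<close>)
    next
      case False
      then have ev: "even (K - Q)" using oddMQ by presburger
      have e: "{l. 1 \<le> l \<and> l \<le> 4*M*Q \<and> P l} = {l. 1 \<le> l \<and> l \<le> 4*Q*M \<and>
          (4*M dvd l - K \<or> 4*M dvd l + K - 2*M) \<and> (4*Q dvd l - K \<or> 4*Q dvd l + K - 2*Q)}"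
        unfolding P_def by (auto simp: mult_ac)
      have "card {l. 1 \<le> l \<and> l \<le> 4*Q*M \<and>
          (4*M dvd l - K \<or> 4*M dvd l + K - 2*M) \<and> (4*Q dvd l - K \<or> 4*Q dvd l + K - 2*Q)}
          = (if 2*M dvd K - M \<or> 2*Q dvd K - Q then 1 else 2)"
        by (rule fiber_nt[OF Q0 M0 _ _ _ _ ev])
           (use k NMQ copMQ oddMQ in \<open>auto simp: K_def coprime_commute add.commute mult_ac\<close>)
      then show ?thesis unfolding e by auto
    qed
    finally show ?thesis unfolding K_def .
  qed
  have wk: "lisa_weight n p (g k) = real (card {l\<in>{1..N}. g l = g k}) / real N" if k: "k \<in> {1..N}" for k
  proof -
    have c1: "cos (pi * of_int (int k) / (2*real q)) = 0 \<longleftrightarrow> 2*Q dvd int k - Q"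
      unfolding Q_def by (rule cos0_iff[OF q0])
    have c2: "cos (pi * of_int (int k) / (2*real n)) = 0 \<longleftrightarrow> 2*M dvd int k - M"
      unfolding M_def by (rule cos0_iff[OF n])
    have cd: "real (card {l\<in>{1..N}. g l = g k}) = (if 2*Q dvd int k - Q \<or> 2*M dvd int k - M then 1 else 2)"
      using fib[OF k] by simp
    show ?thesis unfolding cd unfolding lisa_weight_def gk fst_conv snd_conv abs_sin_less_1 c1 c2
      by (simp add: N_def q_def)
  qed
  have "(\<Sum>k\<in>{1..N}. h (g k)) / real N = (\<Sum>k\<in>{1..N}. h (g k) / real N)"
    by (simp add: sum_divide_distrib)
  also have "\<dots> = (\<Sum>A\<in>g ` {1..N}. \<Sum>k\<in>{l. l \<in> {1..N} \<and> g l = A}. h (g k) / real N)"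
    by (rule sum.image_gen) simp
  also have "\<dots> = (\<Sum>A\<in>g ` {1..N}. lisa_weight n p A * h A)"
  proof (rule sum.cong[OF refl])
    fix A assume "A \<in> g ` {1..N}"
    then obtain k where k: "k \<in> {1..N}" and A: "A = g k" by auto
    have "(\<Sum>l\<in>{l. l \<in> {1..N} \<and> g l = A}. h (g l) / real N) = (\<Sum>l\<in>{l. l \<in> {1..N} \<and> g l = A}. h A / real N)"
      by (rule sum.cong) auto
    also have "\<dots> = real (card {l\<in>{1..N}. g l = g k}) * (h A / real N)" using A by simp
    also have "\<dots> = lisa_weight n p A * h A" unfolding A wk[OF k] by simp
    finally show "(\<Sum>l\<in>{l. l \<in> {1..N} \<and> g l = A}. h (g l) / real N) = lisa_weight n p A * h A" .
  qed
  finally have X: "(\<Sum>k\<in>{1..N}. h (g k)) / real N = (\<Sum>A\<in>g ` {1..N}. lisa_weight n p A * h A)" .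
  show ?thesis unfolding L X[symmetric] by (simp add: g_def N_def q_def)
qed

theorem theorem1:
  fixes n p :: nat and P :: "real \<times> real \<Rightarrow> real"
  assumes "n > 0" "p > 0" "odd p" "coprime n (n + p)"
    and "P \<in> PiQ n p"
  shows "1 / pi\<^sup>2 * (LBINT x=-1..1. (LBINT y=-1..1.
            P (x, y) * (1 / sqrt (1 - x\<^sup>2)) * (1 / sqrt (1 - y\<^sup>2))))
         = (\<Sum>A\<in>Lisa n p. lisa_weight n p A * P A)"
proof -
  note n = assms(1) and p = assms(2) and op = assms(3) and cop = assms(4)
  define G where "G = GammaQ n p"
  obtain c where Pc: "P = (\<lambda>(x, y). \<Sum>(i, j)\<in>G. c (i, j) * cheb i x * cheb j y)"
    using assms(5) unfolding PiQ_def G_def by blast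
  have P_eq: "P z = (\<Sum>s\<in>G. c s * cheb (fst s) (fst z) * cheb (snd s) (snd z))" for z
    unfolding Pc by (simp add: split_def)
  have finG: "finite G"
  proof (rule finite_subset)
    show "G \<subseteq> {0..4*n+4*p} \<times> {0..4*n+4*p}" unfolding G_def GammaQ_def by auto
  qed simp
  have G0: "(0,0) \<in> G" using n unfolding G_def GammaQ_def by auto
  have LHS: "1 / pi\<^sup>2 * (LBINT x=-1..1. (LBINT y=-1..1.
            P (x, y) * (1 / sqrt (1 - x\<^sup>2)) * (1 / sqrt (1 - y\<^sup>2)))) = c (0,0)"
    unfolding P_eq fst_conv snd_conv by (rule lhs_eval[OF finG G0])
  define q where "q = n + p"
  define N where "N = 4*n*q"
  have N0: "real N > 0" using n p by (simp add: N_def q_def)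
  have "(\<Sum>A\<in>Lisa n p. lisa_weight n p A * P A)
     = (\<Sum>k\<in>{1..N}. P (lissajous n p (2*pi*real k/real N))) / real N"
    unfolding N_def q_def by (rule rhs[OF n p op cop])
  also have "(\<Sum>k\<in>{1..N}. P (lissajous n p (2*pi*real k/real N)))
     = (\<Sum>s\<in>G. c s * (\<Sum>k=1..N. cheb (fst s) (sin (real n * (2*pi*real k/real N))) *
                                     cheb (snd s) (sin (real q * (2*pi*real k/real N)))))"
    unfolding P_eq lissajous_def fst_conv snd_conv q_def
    by (subst sum.swap) (simp add: sum_distrib_left mult_ac)
  also have "\<dots> = (\<Sum>s\<in>G. c s * (if s = (0,0) then real N else 0))"
  proof (rule sum.cong[OF refl])
    fix s assume "s \<in> G"
    then have "(fst s, snd s) \<in> GammaQ n p" by (simp add: G_def)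
    from orth[OF n p op cop this q_def N_def] show
      "c s * (\<Sum>k=1..N. cheb (fst s) (sin (real n * (2*pi*real k/real N))) *
            cheb (snd s) (sin (real q * (2*pi*real k/real N)))) = c s * (if s = (0,0) then real N else 0)"
      by simp
  qed
  also have "\<dots> = c (0,0) * real N" using finG G0 by (simp add: if_distrib cong: if_cong)
  finally show ?thesis unfolding LHS using N0 by simp
qed

end
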